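(* Let $N\ge 2$ and $b_1,\dots,b_N\in\{0,1\}$ with $b_N=1$ and $\sum_{j=1}^N b_j 2^{N-j}>1$. Let $s_b$ be the largest real root of $P_b(x)=x^N-\sum_{j=1}^N b_jx^{N-j}$. Then $s_b$ is an algebraic integer of degree greater than $1$. *)

theory Defs
  imports Complex_Main "HOL-Computational_Algebra.Polynomial"
begin

definition algebraic_int :: "'a :: field_char_0 \<Rightarrow> bool" where
  "algebraic_int x \<longleftrightarrow> (\<exists>p :: int poly. lead_coeff p = 1 \<and> poly (map_poly of_int p) x = 0)"

definition alg_degree :: "'a :: field_char_0 \<Rightarrow> nat" where
  "alg_degree x = (LEAST n. \<exists>p :: rat poly. p \<noteq> 0 \<and> degree p = n \<and> poly (map_poly of_rat p) x = 0)"

definition Pb :: "nat \<Rightarrow> (nat \<Rightarrow> nat) \<Rightarrow> real poly" where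
  "Pb N b = monom 1 N - (\<Sum>j = 1..N. monom (real (b j)) (N - j))"

end

theory Submission
  imports Defs
begin

lemma poly_Pb: "poly (Pb N b) x = x^N - (\<Sum>j=1..N. real (b j) * x^(N-j))"
  by (simp add: Pb_def poly_monom poly_sum)

lemma coeff_Pb: "coeff (Pb N b) n = (if N = n then 1 else 0) - (\<Sum>j=1..N. if N - j = n then real (b j) else 0)"
  by (simp add: Pb_def coeff_diff coeff_sum coeff_monom)

lemma degree_Pb: assumes "N \<ge> 1" shows "degree (Pb N b) = N" "lead_coeff (Pb N b) = 1"
proof -
  have c: "coeff (Pb N b) N = 1"
    unfolding coeff_Pb using assms by (auto intro!: sum.neutral)
  have "degree (Pb N b) \<le> N"
    by (rule degree_le) (auto simp: coeff_Pb intro!: sum.neutral)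
  moreover have "N \<le> degree (Pb N b)" by (rule le_degree) (simp add: c)
  ultimately show d: "degree (Pb N b) = N" by simp
  show "lead_coeff (Pb N b) = 1" using c d by simp
qed

lemma alg_int_Pb: assumes "N \<ge> 1" "poly (Pb N b) s = 0" shows "Polynomial.algebraic_int s"
proof (rule Polynomial.algebraic_int.intros[of "Pb N b"])
  show "lead_coeff (Pb N b) = 1" using degree_Pb assms by simp
  show "\<forall>i. coeff (Pb N b) i \<in> \<int>" unfolding coeff_Pb
    by (auto intro!: Ints_diff Ints_sum)
  show "poly (Pb N b) s = 0" by fact
qed

theorem mainTheorem5:
  fixes N :: nat and b :: "nat \<Rightarrow> nat" and s :: real
  assumes "N \<ge> 2"
    and "\<forall>j\<in>{1..N}. b j \<in> {0, 1}"
    and "b N = 1"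
    and "(\<Sum>j = 1..N. b j * 2 ^ (N - j)) > 1"
    and "poly (Pb N b) s = 0"
    and "\<forall>x. poly (Pb N b) x = 0 \<longrightarrow> x \<le> s"
  shows "algebraic_int s \<and> alg_degree s > 1"
proof -
  have AI: "Polynomial.algebraic_int s" by (rule alg_int_Pb[of N b s]) (use assms(1,5) in auto)
  have A1: "algebraic_int s"
  proof -
    obtain q :: "int poly" where "poly (map_poly of_int q) s = 0" "lead_coeff q = 1"
      using AI unfolding Polynomial.algebraic_int_altdef_ipoly by blast
    thus ?thesis unfolding algebraic_int_def by blast
  qed
  define R :: "rat poly" where "R = monom 1 N - (\<Sum>j = 1..N. monom (of_nat (b j)) (N - j))"
  have RP: "map_poly of_rat R = Pb N b"
  proof (rule poly_eqI)
    fix n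
    have "coeff R n = (if N = n then 1 else 0) - (\<Sum>j=1..N. if N - j = n then of_nat (b j) else 0)"
      by (simp add: R_def coeff_diff coeff_sum coeff_monom)
    hence "of_rat (coeff R n) = (if N = n then 1 else 0) - (\<Sum>j=1..N. if N - j = n then real (b j) else 0)"
    proof -
      have "(\<Sum>j=1..N. of_rat (if N - j = n then of_nat (b j) else 0)) = (\<Sum>j=1..N. if N - j = n then real (b j) else (0::real))"
        by (rule sum.cong) auto
      moreover have "of_rat (if N = n then 1 else 0) = (if N = n then 1 else (0::real))" by simp
      ultimately show ?thesis using \<open>coeff R n = _\<close> by (simp only: of_rat_diff of_rat_sum)
    qed
    thus "coeff (map_poly of_rat R) n = coeff (Pb N b) n"
      by (simp add: coeff_map_poly coeff_Pb)
  qed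
  have R0: "R \<noteq> 0"
  proof
    assume "R = 0"
    then have "Pb N b = 0" using RP by simp
    then show False using degree_Pb(2)[of N b] assms(1) by simp
  qed
  have ex: "\<exists>n. \<exists>p :: rat poly. p \<noteq> 0 \<and> degree p = n \<and> poly (map_poly of_rat p) s = 0"
    by (intro exI[of _ "degree R"] exI[of _ R]) (simp add: RP assms(5) R0)
  have "\<exists>p :: rat poly. p \<noteq> 0 \<and> degree p = alg_degree s \<and> poly (map_poly of_rat p) s = 0"
    unfolding alg_degree_def by (rule LeastI_ex[OF ex])
  then obtain p :: "rat poly" where p: "p \<noteq> 0" "degree p = alg_degree s"
    "poly (map_poly of_rat p) s = 0" by blast
  have P0: "poly (Pb N b) 0 = -1"
  proof -
    have "(\<Sum>j=1..N. real (b j) * 0^(N-j)) = (\<Sum>j\<in>{1..N}. if j = N then 1 else 0)"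
      using assms(1,3) by (intro sum.cong) auto
    also have "\<dots> = 1" using assms(1) by simp
    finally show ?thesis using assms(1) by (simp add: poly_Pb)
  qed
  define X where "X = real N + 1"
  have PX: "poly (Pb N b) X > 0"
  proof -
    have "(\<Sum>j=1..N. real (b j) * X^(N-j)) \<le> (\<Sum>j=1..N. X^(N-1))"
    proof (rule sum_mono)
      fix j assume j: "j \<in> {1..N}"
      have "b j \<in> {0,1}" using assms(2) j by blast
      hence "real (b j) \<le> 1" by auto
      moreover have "X^(N-j) \<le> X^(N-1)" using j by (intro power_increasing) (auto simp: X_def)
      moreover have "X^(N-j) \<ge> 0" by (simp add: X_def)
      ultimately show "real (b j) * X^(N-j) \<le> X^(N-1)"
        by (metis mult_left_le_one_le of_nat_0_le_iff order.trans)
    qed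
    also have "\<dots> = real N * X^(N-1)" by simp
    also have "\<dots> < X * X^(N-1)" by (simp add: X_def)
    also have "\<dots> = X^N"
    proof -
      have "Suc (N-1) = N" using assms(1) by simp
      then show ?thesis by (metis power_Suc)
    qed
    finally show ?thesis by (simp add: poly_Pb)
  qed
  obtain r where r: "r > 0" "poly (Pb N b) r = 0"
    using poly_IVT_pos[of 0 X "Pb N b"] P0 PX by (auto simp: X_def)
  have spos: "s > 0" using r assms(6) by force
  show ?thesis
  proof (intro conjI A1)
    show "alg_degree s > 1"
    proof (rule ccontr)
    assume "\<not> 1 < alg_degree s"
    hence dp: "degree p \<le> 1" using p(2) by simp
    let ?q = "map_poly (of_rat :: rat \<Rightarrow> real) p"
    have "poly ?q s = (\<Sum>i\<le>degree ?q. coeff ?q i * s^i)" by (rule poly_altdef)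
    also have "degree ?q = degree p" by (simp add: degree_map_poly)
    finally have ev: "poly ?q s = (\<Sum>i\<le>degree p. of_rat (coeff p i) * s^i)"
      by (simp add: coeff_map_poly)
    have "s \<in> \<rat>"
    proof (cases "degree p = 0")
      case True
      then have "coeff p 0 \<noteq> 0" using p(1) by (metis leading_coeff_0_iff)
      then show ?thesis using ev p(3) True by simp
    next
      case False
      hence d1: "degree p = 1" using dp by simp
      hence c1: "coeff p 1 \<noteq> 0" using p(1) by (metis leading_coeff_0_iff)
      have "of_rat (coeff p 0) + of_rat (coeff p 1) * s = 0" using ev p(3) d1 by simp
      hence "s = - of_rat (coeff p 0) / of_rat (coeff p 1)" using c1 by (simp add: field_simps)
      also have "\<dots> \<in> \<rat>" by simp
      finally show ?thesis .
    qed
    hence "s \<in> \<int>" using rational_algebraic_int_is_int AI by blast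
    then obtain m where m: "s = of_int m" by (auto elim: Ints_cases)
    have mpos: "m > 0" using spos m by simp
    define K where "K = N - 1"
    have K: "N = Suc K" "K \<ge> 1" using assms(1) by (auto simp: K_def)
    have eq: "real_of_int (m^N) = real_of_int ((\<Sum>j=1..K. int (b j) * m^(N-j)) + 1)"
      using assms(5) assms(3) m K by (simp add: poly_Pb)
    hence eqi: "m^N = (\<Sum>j=1..K. int (b j) * m^(N-j)) + 1" by linarith
    have "m dvd (\<Sum>j=1..K. int (b j) * m^(N-j))"
      using K by (intro dvd_sum) (auto intro!: dvd_mult dvd_power)
    moreover have "m dvd m^N" using K by simp
    ultimately have "m dvd 1" using eqi by (metis dvd_add_right_iff)
    hence m1: "m = 1" using mpos zdvd_imp_le by fastforce
    have "(\<Sum>j=1..K. real (b j)) + 1 = 1" using assms(5) assms(3) m m1 K by (simp add: poly_Pb)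
    hence "(\<Sum>j=1..K. real (b j)) = 0" by simp
    hence z: "\<forall>j\<in>{1..K}. b j = 0" by (simp add: sum_nonneg_eq_0_iff)
    have "(\<Sum>j = 1..N. b j * 2 ^ (N - j)) = (\<Sum>j = 1..K. b j * 2 ^ (N - j)) + 1"
      using K assms(3) by simp
    also have "(\<Sum>j = 1..K. b j * 2 ^ (N - j)) = 0" using z by simp
    finally show False using assms(4) by simp
  qed
  qed
qed

end
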